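(* Let $a,b>1$ be real numbers, $h_n:=\frac{1}{a^n}$ and $k_n:=\frac{1}{b^n}$. Let $f$ be a real valued function defined on $D=\{0,h_1,-k_1,h_2,-k_2,\ldots\}$ and let $R,L$ be real numbers. Assume $f(0)=0$ and \[\frac{f(h_n)}{h_n}\to R\quad\text{and}\quad\frac{f(-k_n)}{-k_n}\to L.\] Then: (i) if $\frac{\log a}{\log b}$ is a rational number, then $R$ and $L$ are the only accumulation points of the set of sequential cord derivatives of $f$ at $0$; (ii) if $\frac{\log a}{\log b}$ is irrational, then every real number between $L$ and $R$ is a sequential cord derivative of $f$ at $0$.
   Context: $L'\in\overline{\mathbb{R}}=\mathbb{R}\cup\{\pm\infty\}$ is a sequential cord derivative of $f$ at $0$ if there are sequences $h'_n>0$, $k'_n>0$ with $h'_n\to0$, $k'_n\to0$, $h'_n\in D$, $-k'_n\in D$ for all $n$, and $\frac{f(h'_n)-f(-k'_n)}{h'_n+k'_n}\to L'$. *)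

theory Defs
  imports "HOL-Analysis.Analysis"
begin

definition seq_cord_deriv :: "(real \<Rightarrow> real) \<Rightarrow> real set \<Rightarrow> ereal \<Rightarrow> bool" where
  "seq_cord_deriv f D L' \<longleftrightarrow>
     (\<exists>h k :: nat \<Rightarrow> real.
        (\<forall>n. h n > 0 \<and> k n > 0 \<and> h n \<in> D \<and> - k n \<in> D) \<and>
        h \<longlonglongrightarrow> 0 \<and> k \<longlonglongrightarrow> 0 \<and>
        (\<lambda>n. ereal ((f (h n) - f (- k n)) / (h n + k n))) \<longlonglongrightarrow> L')"

definition cord_domain :: "real \<Rightarrow> real \<Rightarrow> real set" where
  "cord_domain a b = {0} \<union> {1 / a ^ n | n. n \<ge> 1} \<union> {- (1 / b ^ n) | n. n \<ge> 1}"

end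

theory Submission
  imports Defs "HOL-Analysis.Kronecker_Approximation_Theorem"
begin

definition th :: "real \<Rightarrow> real" where "th w = inverse (1 + exp w)"

lemma th_pos: "0 < th w" by (simp add: th_def add_pos_pos)
lemma th_lt1: "th w < 1" unfolding th_def
  by (simp add: inverse_less_1_iff add_pos_pos)
lemma th_less_iff: "th x < th y \<longleftrightarrow> y < x"
  unfolding th_def by (simp add: inverse_less_iff_less add_pos_pos)

lemma th_ln: assumes "0 < s" "s < 1" shows "th (ln ((1 - s) / s)) = s"
  using assms by (simp add: th_def field_simps)

lemma th_pow: assumes "a > 1" "b > 1"
  shows "th (real n * ln a - real m * ln b) = (1 / a ^ n) / (1 / a ^ n + 1 / b ^ m)"
proof -
  have "exp (real n * ln a - real m * ln b) = a ^ n / b ^ m"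
    using assms by (simp add: exp_diff exp_of_nat_mult)
  note e = this
  show ?thesis unfolding th_def e using assms by (simp add: field_simps)
qed

definition gg :: "real \<Rightarrow> real \<Rightarrow> real \<Rightarrow> real" where "gg R L t = R * t + L * (1 - t)"

lemma gg_bounds: assumes "0 \<le> t" "t \<le> 1"
  shows "min R L \<le> gg R L t" "gg R L t \<le> max R L"
proof -
  have "min R L * t \<le> R * t" "min R L * (1 - t) \<le> L * (1 - t)"
    using assms by (auto intro: mult_right_mono)
  then show "min R L \<le> gg R L t" unfolding gg_def by (simp add: algebra_simps)
  have "max R L * t \<ge> R * t" "max R L * (1 - t) \<ge> L * (1 - t)"
    using assms by (auto intro: mult_right_mono)
  then show "gg R L t \<le> max R L" unfolding gg_def by (simp add: algebra_simps)
qed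

lemma gg_diff: "gg R L u - gg R L v = (R - L) * (u - v)"
  unfolding gg_def by (simp add: algebra_simps)

lemma prod_neg_iff: assumes "(p::real) < q" shows "(u - p) * (u - q) < 0 \<longleftrightarrow> p < u \<and> u < q"
  using assms by (auto simp: mult_less_0_iff)

lemma quot_bound:
  fixes h k e1 e2 :: real
  assumes "h > 0" "k > 0" "e1 = f h / h - R" "e2 = f (- k) / (- k) - L"
  shows "\<bar>(f h - f (- k)) / (h + k) - gg R L (h / (h + k))\<bar> \<le> \<bar>e1\<bar> + \<bar>e2\<bar>"
proof -
  have fh: "f h = h * (R + e1)" "f (-k) = - k * (L + e2)" using assms by (auto simp: field_simps)
  have hk: "h + k > 0" using assms by simp
  have g1: "1 - h / (h + k) = k / (h + k)" using hk by (simp add: field_simps)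
  have g: "gg R L (h / (h + k)) = (R * h + L * k) / (h + k)"
    unfolding gg_def g1 by (simp add: add_divide_distrib)
  have eq: "(f h - f (- k)) / (h + k) - gg R L (h / (h + k)) = (h * e1 + k * e2) / (h + k)"
  proof -
    have num: "(f h - f (- k)) - (R * h + L * k) = h * e1 + k * e2" unfolding fh by (simp add: algebra_simps)
    show ?thesis by (simp only: g diff_divide_distrib[symmetric] num)
  qed
  have "\<bar>h * e1 + k * e2\<bar> \<le> h * \<bar>e1\<bar> + k * \<bar>e2\<bar>"
    using abs_triangle_ineq[of "h * e1" "k * e2"] assms by (simp add: abs_mult)
  also have "\<dots> \<le> (h + k) * (\<bar>e1\<bar> + \<bar>e2\<bar>)"
    using assms by (simp add: algebra_simps)
  finally show ?thesis unfolding eq using hk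
    by (simp add: abs_divide divide_le_eq mult.commute)
qed

lemma density:
  fixes a b y \<delta> :: real
  assumes a1: "a > 1" and b1: "b > 1" and irr: "ln a / ln b \<notin> \<rat>" and d: "\<delta> > 0"
  shows "\<exists>n m. N \<le> n \<and> N \<le> m \<and> \<bar>real n * ln a - real m * ln b - y\<bar> < \<delta>"
proof -
  define t where "t = ln a / ln b"
  have la: "ln a > 0" and lb: "ln b > 0" using a1 b1 by auto
  have t0: "t > 0" unfolding t_def using la lb by simp
  have lat: "ln a = t * ln b" unfolding t_def using lb by simp
  define y' where "y' = y / ln b"
  define d' where "d' = min (\<delta> / ln b) 1"
  have d'0: "d' > 0" unfolding d'_def using d lb by simp
  obtain M :: nat where M: "real N + y' + 1 < real M * t"
    using reals_Archimedean3[OF t0] by blast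
  define M' where "M' = max M N"
  have M'M: "real M * t \<le> real M' * t" unfolding M'_def using t0 by (intro mult_right_mono) auto
  obtain h k :: int where k0: "k > 0" and hk: "\<bar>of_int k * t - of_int h - (y' - real M' * t)\<bar> < d'"
    using sequence_of_fractional_parts_is_dense[OF irr[folded t_def] d'0] by metis
  have d'1: "d' \<le> 1" unfolding d'_def by simp
  have kt: "of_int k * t \<ge> 0" using k0 t0 by simp
  have hbig: "real_of_int h > real N" using hk d'1 kt M M'M by linarith
  define n where "n = M' + nat k"
  define m where "m = nat h"
  have rn: "real n = real M' + of_int k" unfolding n_def using k0 by simp
  have rm: "real m = of_int h" unfolding m_def using hbig by simp
  have "N \<le> n" unfolding n_def M'_def by simp
  moreover have "N \<le> m" using hbig rm by linarith
  moreover have "\<bar>real n * ln a - real m * ln b - y\<bar> < \<delta>"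
  proof -
    have "real n * ln a - real m * ln b - y
        = ln b * (of_int k * t - of_int h - (y' - real M' * t))"
      unfolding rn rm lat y'_def using lb by (simp add: field_simps)
    also have "\<bar>\<dots>\<bar> < ln b * d'" using hk lb by (simp add: abs_mult)
    also have "\<dots> \<le> \<delta>" unfolding d'_def using lb d by (simp add: min_def field_simps)
    finally show ?thesis .
  qed
  ultimately show ?thesis by blast
qed

lemma one_minus_th: "1 - th w \<le> exp w"
proof -
  have p: "1 + exp w \<noteq> 0" using exp_gt_zero[of w] by linarith
  have "1 - th w = exp w / (1 + exp w)" unfolding th_def using p by (simp add: field_simps)
  also have "\<dots> \<le> exp w" by (simp add: divide_le_eq add_pos_pos)
  finally show ?thesis .
qed

lemma th_le_exp: "th w \<le> exp (- w)"
  unfolding th_def exp_minus by (intro le_imp_inverse_le) auto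

lemma th_approx:
  fixes a b s \<epsilon> :: real
  assumes a1: "a > 1" and b1: "b > 1" and irr: "ln a / ln b \<notin> \<rat>"
    and s: "0 \<le> s" "s \<le> 1" and e: "\<epsilon> > 0"
  shows "\<exists>n m. N \<le> n \<and> N \<le> m \<and> \<bar>th (real n * ln a - real m * ln b) - s\<bar> < \<epsilon>"
proof -
  have la: "ln a > 0" and lb: "ln b > 0" using a1 b1 by auto
  consider "s = 1" | "s = 0" | "0 < s" "s < 1" using s by linarith
  then show ?thesis
  proof cases
    case 1
    obtain K :: nat where K: "real N * ln a - ln \<epsilon> < real K * ln b"
      using reals_Archimedean3[OF lb] by blast
    define w where "w = real N * ln a - real (N + K) * ln b"
    have "real N * ln b \<ge> 0" using lb by simp
    moreover have "real (N + K) * ln b = real N * ln b + real K * ln b" by (simp add: distrib_right)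
    ultimately have "w < ln \<epsilon>" unfolding w_def using K by linarith
    then have "exp w < \<epsilon>" using e by (metis exp_less_mono exp_ln)
    then have "\<bar>th w - s\<bar> < \<epsilon>" using one_minus_th[of w] th_lt1[of w] 1 by simp
    then show ?thesis unfolding w_def by (intro exI[of _ N] exI[of _ "N + K"]) simp
  next
    case 2
    obtain K :: nat where K: "real N * ln b - ln \<epsilon> < real K * ln a"
      using reals_Archimedean3[OF la] by blast
    define w where "w = real (N + K) * ln a - real N * ln b"
    have "real N * ln a \<ge> 0" using la by simp
    moreover have "real (N + K) * ln a = real N * ln a + real K * ln a" by (simp add: distrib_right)
    ultimately have "- w < ln \<epsilon>" unfolding w_def using K by linarith
    then have "exp (- w) < \<epsilon>" using e by (metis exp_less_mono exp_ln)
    then have "\<bar>th w - s\<bar> < \<epsilon>" using th_le_exp[of w] th_pos[of w] 2 by simp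
    then show ?thesis unfolding w_def by (intro exI[of _ "N + K"] exI[of _ N]) simp
  next
    case 3
    define w0 where "w0 = ln ((1 - s) / s)"
    have thw0: "th w0 = s" unfolding w0_def using th_ln 3 by blast
    have "isCont th w0" unfolding th_def
      by (intro continuous_intros) (use exp_gt_zero[of w0] in linarith)
    then obtain \<delta> where d: "\<delta> > 0" and dd: "\<And>w. dist w w0 < \<delta> \<Longrightarrow> dist (th w) (th w0) < \<epsilon>"
      unfolding continuous_at_eps_delta using e by blast
    obtain n m where nm: "N \<le> n" "N \<le> m" "\<bar>real n * ln a - real m * ln b - w0\<bar> < \<delta>"
      using density[OF a1 b1 irr d] by blast
    have "\<bar>th (real n * ln a - real m * ln b) - s\<bar> < \<epsilon>"
      using dd[of "real n * ln a - real m * ln b"] nm(3) thw0 by (simp add: dist_real_def)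
    then show ?thesis using nm by blast
  qed
qed

context
  fixes a b R L :: real and f :: "real \<Rightarrow> real"
  assumes a1: "a > 1" and b1: "b > 1"
    and limR: "(\<lambda>n. f (1 / a ^ n) / (1 / a ^ n)) \<longlonglongrightarrow> R"
    and limL: "(\<lambda>n. f (- (1 / b ^ n)) / (- (1 / b ^ n))) \<longlonglongrightarrow> L"
begin

lemma e1_lim: "(\<lambda>n. f (1 / a ^ n) / (1 / a ^ n) - R) \<longlonglongrightarrow> 0"
  using LIM_zero[OF limR] .
lemma e2_lim: "(\<lambda>n. f (- (1 / b ^ n)) / (- (1 / b ^ n)) - L) \<longlonglongrightarrow> 0"
  using LIM_zero[OF limL] .

lemma Q_bound:
  "\<bar>(f (1 / a ^ n) - f (- (1 / b ^ m))) / (1 / a ^ n + 1 / b ^ m)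
     - gg R L (th (real n * ln a - real m * ln b))\<bar>
   \<le> \<bar>f (1 / a ^ n) / (1 / a ^ n) - R\<bar> + \<bar>f (- (1 / b ^ m)) / (- (1 / b ^ m)) - L\<bar>"
  unfolding th_pow[OF a1 b1]
  by (rule quot_bound) (use a1 b1 in auto)

lemma gg_th_bounds: "min R L \<le> gg R L (th w)" "gg R L (th w) \<le> max R L"
  using gg_bounds[of "th w" R L] th_pos[of w] th_lt1[of w] by auto

lemma cordA:
  assumes H: "\<forall>\<epsilon>>0. \<forall>N. \<exists>n m. N \<le> n \<and> N \<le> m \<and>
     \<bar>gg R L (th (real n * ln a - real m * ln b)) - x\<bar> < \<epsilon>"
  shows "seq_cord_deriv f (cord_domain a b) (ereal x)"
proof -
  let ?Q = "\<lambda>n m. (f (1 / a ^ n) - f (- (1 / b ^ m))) / (1 / a ^ n + 1 / b ^ m)"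
  have H2: "\<exists>n m. N \<le> n \<and> N \<le> m \<and> \<bar>?Q n m - x\<bar> < \<epsilon>" if "\<epsilon> > 0" for \<epsilon> N
  proof -
    have e3: "\<epsilon> / 3 > 0" using that by simp
    obtain N1 where N1: "\<forall>n\<ge>N1. \<bar>f (1 / a ^ n) / (1 / a ^ n) - R\<bar> < \<epsilon> / 3"
      using e1_lim e3 unfolding LIMSEQ_iff by (metis real_norm_def diff_zero)
    obtain N2 where N2: "\<forall>n\<ge>N2. \<bar>f (- (1 / b ^ n)) / (- (1 / b ^ n)) - L\<bar> < \<epsilon> / 3"
      using e2_lim e3 unfolding LIMSEQ_iff by (metis real_norm_def diff_zero)
    obtain n m where nm: "max N (max N1 N2) \<le> n" "max N (max N1 N2) \<le> m"
      "\<bar>gg R L (th (real n * ln a - real m * ln b)) - x\<bar> < \<epsilon> / 3"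
      using H e3 by blast
    have "\<bar>f (1 / a ^ n) / (1 / a ^ n) - R\<bar> < \<epsilon> / 3" using N1 nm by auto
    moreover have "\<bar>f (- (1 / b ^ m)) / (- (1 / b ^ m)) - L\<bar> < \<epsilon> / 3" using N2 nm by auto
    ultimately have "\<bar>?Q n m - x\<bar> < \<epsilon>" using Q_bound[of n m] nm(3) by linarith
    then show ?thesis using nm by auto
  qed
  have "\<forall>j. \<exists>n m. Suc j \<le> n \<and> Suc j \<le> m \<and> \<bar>?Q n m - x\<bar> < inverse (real (Suc j))"
    using H2 by simp
  then obtain nn mm where nm: "\<And>j. Suc j \<le> nn j" "\<And>j. Suc j \<le> mm j"
     "\<And>j. \<bar>?Q (nn j) (mm j) - x\<bar> < inverse (real (Suc j))" by metis
  have nn_top: "filterlim nn at_top sequentially"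
    by (rule filterlim_at_top_mono[OF filterlim_Suc]) (use nm in auto)
  have mm_top: "filterlim mm at_top sequentially"
    by (rule filterlim_at_top_mono[OF filterlim_Suc]) (use nm in auto)
  have pa: "(\<lambda>n. 1 / a ^ n) \<longlonglongrightarrow> 0"
    using LIMSEQ_inverse_realpow_zero[OF a1] by (simp add: inverse_eq_divide)
  have pb: "(\<lambda>n. 1 / b ^ n) \<longlonglongrightarrow> 0"
    using LIMSEQ_inverse_realpow_zero[OF b1] by (simp add: inverse_eq_divide)
  have Qlim: "(\<lambda>j. ?Q (nn j) (mm j)) \<longlonglongrightarrow> x"
  proof (rule LIM_zero_cancel, rule Lim_null_comparison)
    show "\<forall>\<^sub>F j in sequentially. norm (?Q (nn j) (mm j) - x) \<le> inverse (real (Suc j))"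
      using nm(3) by (intro always_eventually allI less_imp_le) simp
  qed (rule LIMSEQ_inverse_real_of_nat)
  show ?thesis unfolding seq_cord_deriv_def
  proof (rule exI[of _ "\<lambda>j. 1 / a ^ nn j"], rule exI[of _ "\<lambda>j. 1 / b ^ mm j"], intro conjI allI)
    fix j
    show "1 / a ^ nn j > 0" "1 / b ^ mm j > 0" using a1 b1 by auto
    have "1 \<le> nn j" "1 \<le> mm j" using nm(1,2)[of j] by auto
    then show "1 / a ^ nn j \<in> cord_domain a b" "- (1 / b ^ mm j) \<in> cord_domain a b"
      unfolding cord_domain_def by blast+
  next
    show "(\<lambda>j. 1 / a ^ nn j) \<longlonglongrightarrow> 0" using filterlim_compose[OF pa nn_top] .
    show "(\<lambda>j. 1 / b ^ mm j) \<longlonglongrightarrow> 0" using filterlim_compose[OF pb mm_top] .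
    show "(\<lambda>j. ereal ((f (1 / a ^ nn j) - f (- (1 / b ^ mm j))) / (1 / a ^ nn j + 1 / b ^ mm j)))
       \<longlonglongrightarrow> ereal x" using Qlim by simp
  qed
qed


lemma cordB:
  assumes "seq_cord_deriv f (cord_domain a b) y"
  shows "\<exists>x. y = ereal x \<and> (\<exists>nn mm. (\<forall>j. 1 \<le> nn j \<and> 1 \<le> mm j) \<and>
     (\<lambda>j. gg R L (th (real (nn j) * ln a - real (mm j) * ln b))) \<longlonglongrightarrow> x)"
proof -
  obtain h k :: "nat \<Rightarrow> real" where hk: "\<And>n. h n > 0" "\<And>n. k n > 0"
      "\<And>n. h n \<in> cord_domain a b" "\<And>n. - k n \<in> cord_domain a b"
      and h0: "h \<longlonglongrightarrow> 0" and k0: "k \<longlonglongrightarrow> 0"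
      and ql: "(\<lambda>n. ereal ((f (h n) - f (- k n)) / (h n + k n))) \<longlonglongrightarrow> y"
    using assms unfolding seq_cord_deriv_def by blast
  have "\<exists>n. 1 \<le> n \<and> h j = 1 / a ^ n" for j
  proof -
    have "h j \<noteq> - (1 / b ^ n)" for n using hk(1)[of j] b1
      by (smt (verit) divide_pos_pos zero_less_power)
    then show ?thesis using hk(3)[of j] hk(1)[of j] unfolding cord_domain_def by auto
  qed
  then obtain nn where nn: "\<And>j. 1 \<le> nn j" "\<And>j. h j = 1 / a ^ nn j" by metis
  have "\<exists>m. 1 \<le> m \<and> k j = 1 / b ^ m" for j
  proof -
    have "- k j \<noteq> 1 / a ^ n" for n using hk(2)[of j] a1
      by (smt (verit) divide_pos_pos zero_less_power)
    then show ?thesis using hk(4)[of j] hk(2)[of j] unfolding cord_domain_def by auto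
  qed
  then obtain mm where mm: "\<And>j. 1 \<le> mm j" "\<And>j. k j = 1 / b ^ mm j" by metis
  have nn_top: "filterlim nn at_top sequentially"
    unfolding filterlim_at_top
  proof
    fix Z
    have "1 / a ^ Z > 0" using a1 by simp
    then have "\<forall>\<^sub>F j in sequentially. h j < 1 / a ^ Z" using order_tendstoD(2)[OF h0] by blast
    then show "\<forall>\<^sub>F j in sequentially. Z \<le> nn j"
    proof (rule eventually_mono)
      fix j assume "h j < 1 / a ^ Z"
      show "Z \<le> nn j"
      proof (rule ccontr)
        assume "\<not> Z \<le> nn j"
        then have "a ^ nn j \<le> a ^ Z" using a1 by (intro power_increasing) auto
        then have "1 / a ^ Z \<le> 1 / a ^ nn j" using a1 by (intro divide_left_mono) auto
        then show False using \<open>h j < 1 / a ^ Z\<close> nn(2)[of j] by simp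
      qed
    qed
  qed
  have mm_top: "filterlim mm at_top sequentially"
    unfolding filterlim_at_top
  proof
    fix Z
    have "1 / b ^ Z > 0" using b1 by simp
    then have "\<forall>\<^sub>F j in sequentially. k j < 1 / b ^ Z" using order_tendstoD(2)[OF k0] by blast
    then show "\<forall>\<^sub>F j in sequentially. Z \<le> mm j"
    proof (rule eventually_mono)
      fix j assume "k j < 1 / b ^ Z"
      show "Z \<le> mm j"
      proof (rule ccontr)
        assume "\<not> Z \<le> mm j"
        then have "b ^ mm j \<le> b ^ Z" using b1 by (intro power_increasing) auto
        then have "1 / b ^ Z \<le> 1 / b ^ mm j" using b1 by (intro divide_left_mono) auto
        then show False using \<open>k j < 1 / b ^ Z\<close> mm(2)[of j] by simp
      qed
    qed
  qed
  define G where "G j = gg R L (th (real (nn j) * ln a - real (mm j) * ln b))" for j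
  define Q where "Q j = (f (h j) - f (- k j)) / (h j + k j)" for j
  have E1: "(\<lambda>j. f (1 / a ^ nn j) / (1 / a ^ nn j) - R) \<longlonglongrightarrow> 0"
    using filterlim_compose[OF e1_lim nn_top] .
  have E2: "(\<lambda>j. f (- (1 / b ^ mm j)) / (- (1 / b ^ mm j)) - L) \<longlonglongrightarrow> 0"
    using filterlim_compose[OF e2_lim mm_top] .
  have dlim: "(\<lambda>j. Q j - G j) \<longlonglongrightarrow> 0"
  proof (rule Lim_null_comparison)
    show "\<forall>\<^sub>F j in sequentially. norm (Q j - G j) \<le>
       \<bar>f (1 / a ^ nn j) / (1 / a ^ nn j) - R\<bar> + \<bar>f (- (1 / b ^ mm j)) / (- (1 / b ^ mm j)) - L\<bar>"
      unfolding Q_def G_def nn(2) mm(2) using Q_bound by (intro always_eventually allI) simp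
    show "(\<lambda>j. \<bar>f (1 / a ^ nn j) / (1 / a ^ nn j) - R\<bar> + \<bar>f (- (1 / b ^ mm j)) / (- (1 / b ^ mm j)) - L\<bar>)
       \<longlonglongrightarrow> 0"
      using tendsto_add[OF tendsto_rabs[OF E1] tendsto_rabs[OF E2]] by simp
  qed
  obtain j0 where j0: "\<And>j. j \<ge> j0 \<Longrightarrow> \<bar>Q j - G j\<bar> < 1"
    using dlim unfolding LIMSEQ_iff by (metis real_norm_def diff_zero zero_less_one)
  have Gb: "min R L \<le> G j" "G j \<le> max R L" for j unfolding G_def using gg_th_bounds by auto
  have ql': "(\<lambda>j. ereal (Q j)) \<longlonglongrightarrow> y" using ql unfolding Q_def .
  have "y \<le> ereal (max R L + 1)"
  proof (rule tendsto_upperbound[OF ql'])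
    show "\<forall>\<^sub>F j in sequentially. ereal (Q j) \<le> ereal (max R L + 1)"
      unfolding eventually_sequentially using j0 Gb by (smt (verit) ereal_less_eq(3))
  qed simp
  moreover have "ereal (min R L - 1) \<le> y"
  proof (rule tendsto_lowerbound[OF ql'])
    show "\<forall>\<^sub>F j in sequentially. ereal (min R L - 1) \<le> ereal (Q j)"
      unfolding eventually_sequentially using j0 Gb by (smt (verit) ereal_less_eq(3))
  qed simp
  ultimately obtain x where yx: "y = ereal x" by (cases y) auto
  have "Q \<longlonglongrightarrow> x" using ql' unfolding yx by simp
  then have "(\<lambda>j. Q j - (Q j - G j)) \<longlonglongrightarrow> x - 0" using dlim by (intro tendsto_diff)
  then have "G \<longlonglongrightarrow> x" by simp
  then show ?thesis using yx nn(1) mm(1) unfolding G_def by blast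
qed

lemma part2:
  assumes irr: "ln a / ln b \<notin> \<rat>" and x: "x \<in> {min L R..max L R}"
  shows "seq_cord_deriv f (cord_domain a b) (ereal x)"
proof (rule cordA, intro allI impI)
  fix \<epsilon> :: real and N :: nat assume e: "\<epsilon> > 0"
  show "\<exists>n m. N \<le> n \<and> N \<le> m \<and> \<bar>gg R L (th (real n * ln a - real m * ln b)) - x\<bar> < \<epsilon>"
  proof (cases "R = L")
    case True
    then have "x = R" using x by auto
    then show ?thesis using True e by (intro exI[of _ N] exI[of _ N]) (simp add: gg_def algebra_simps)
  next
    case False
    define s where "s = (x - L) / (R - L)"
    have s01: "0 \<le> s \<and> s \<le> 1"
    proof (cases "R < L")
      case True
      then have "R \<le> x" "x \<le> L" using x by auto
      then show ?thesis unfolding s_def using True by (auto simp: divide_simps)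
    next
      case False
      then have "L \<le> x" "x \<le> R" using x by auto
      then show ?thesis unfolding s_def using False \<open>R \<noteq> L\<close> by (auto simp: divide_simps)
    qed
    have g1: "gg R L s = L + (R - L) * s" by (simp add: gg_def algebra_simps)
    have g2: "(R - L) * s = x - L" unfolding s_def using \<open>R \<noteq> L\<close> by simp
    have gs: "gg R L s = x" unfolding g1 g2 by simp
    have RL: "\<bar>R - L\<bar> > 0" using False by simp
    obtain n m where nm: "N \<le> n" "N \<le> m" "\<bar>th (real n * ln a - real m * ln b) - s\<bar> < \<epsilon> / \<bar>R - L\<bar>"
      using th_approx[OF a1 b1 irr, of s "\<epsilon> / \<bar>R - L\<bar>" N] s01 e RL by auto
    have "\<bar>gg R L (th (real n * ln a - real m * ln b)) - x\<bar>
        = \<bar>R - L\<bar> * \<bar>th (real n * ln a - real m * ln b) - s\<bar>"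
      unfolding gs[symmetric] gg_diff abs_mult ..
    also have "\<dots> < \<epsilon>" using nm(3) RL by (simp add: field_simps)
    finally show ?thesis using nm by blast
  qed
qed

lemma rat_lin:
  assumes "ln a / ln b \<in> \<rat>"
  shows "\<exists>P Q :: int. P > 0 \<and> Q > 0 \<and> of_int Q * ln a = of_int P * ln b"
proof -
  obtain P Q :: int where Q: "Q > 0" and r: "ln a / ln b = of_int P / of_int Q"
    using Rats_cases'[OF assms] by metis
  have la: "ln a > 0" and lb: "ln b > 0" using a1 b1 by auto
  have "of_int P / of_int Q > (0::real)" using r la lb by (metis divide_pos_pos)
  then have P: "P > 0" using Q by (simp add: zero_less_divide_iff)
  have "of_int Q * ln a = of_int P * ln b" using r lb Q by (simp add: field_simps)
  then show ?thesis using P Q by blast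
qed

lemma part1_claim:
  fixes P Q :: int and x :: ereal
  assumes P: "P > 0" and Q: "Q > 0" and lin: "of_int Q * ln a = of_int P * ln b"
    and nR: "x \<noteq> ereal R" and nL: "x \<noteq> ereal L"
  shows "\<exists>U F. open U \<and> x \<in> U \<and> finite F \<and>
     (\<forall>n m. ereal (gg R L (th (real n * ln a - real m * ln b))) \<in> U \<longrightarrow>
        ereal (gg R L (th (real n * ln a - real m * ln b))) \<in> F)"
proof -
  consider "x > ereal (max R L)" | "x < ereal (min R L)"
    | "ereal (min R L) \<le> x" "x \<le> ereal (max R L)" by (meson not_less)
  then show ?thesis
  proof cases
    case 1
    show ?thesis
    proof (rule exI[of _ "{ereal (max R L)<..}"], rule exI[of _ "{}"], intro conjI allI impI)
      show "open {ereal (max R L)<..}" by simp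
      show "x \<in> {ereal (max R L)<..}" using 1 by simp
      show "finite {}" by simp
      fix n m assume "ereal (gg R L (th (real n * ln a - real m * ln b))) \<in> {ereal (max R L)<..}"
      then show "ereal (gg R L (th (real n * ln a - real m * ln b))) \<in> {}"
        using gg_th_bounds(2)[of "real n * ln a - real m * ln b"] by (simp add: max_def min_def split: if_splits)
    qed
  next
    case 2
    show ?thesis
    proof (rule exI[of _ "{..<ereal (min R L)}"], rule exI[of _ "{}"], intro conjI allI impI)
      show "open {..<ereal (min R L)}" by simp
      show "x \<in> {..<ereal (min R L)}" using 2 by simp
      show "finite {}" by simp
      fix n m assume "ereal (gg R L (th (real n * ln a - real m * ln b))) \<in> {..<ereal (min R L)}"
      then show "ereal (gg R L (th (real n * ln a - real m * ln b))) \<in> {}"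
        using gg_th_bounds(1)[of "real n * ln a - real m * ln b"] by (simp add: max_def min_def split: if_splits)
    qed
  next
    case 3
    have fin: "\<And>c d. ereal d \<le> x \<Longrightarrow> x \<le> ereal c \<Longrightarrow> \<exists>r. x = ereal r" by (cases x) auto
    then obtain r where xr: "x = ereal r" using 3 by blast
    have r1: "min R L \<le> r" using 3(1) unfolding xr by (simp only: ereal_less_eq(3))
    have r2: "r \<le> max R L" using 3(2) unfolding xr by (simp only: ereal_less_eq(3))
    have r: "min R L \<le> r" "r \<le> max R L" "r \<noteq> R" "r \<noteq> L" using r1 r2 nR nL xr by auto
    then have RL: "R \<noteq> L" by auto
    define s where "s = (r - L) / (R - L)"
    have s01: "0 < s \<and> s < 1"
    proof (cases "R < L")
      case True
      then have "R < r" "r < L" using r by auto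
      then show ?thesis unfolding s_def using True by (auto simp: divide_simps)
    next
      case False
      then have "L < r" "r < R" using r by auto
      then show ?thesis unfolding s_def using False RL by (auto simp: divide_simps)
    qed
    have g1: "gg R L s = L + (R - L) * s" by (simp add: gg_def algebra_simps)
    have g2: "(R - L) * s = r - L" unfolding s_def using RL by simp
    have gs: "gg R L s = r" unfolding g1 g2 by simp
    define w0 where "w0 = ln ((1 - s) / s)"
    have thw0: "th w0 = s" unfolding w0_def using th_ln s01 by blast
    define p where "p = th (w0 + 1)"
    define q where "q = th (w0 - 1)"
    have ps: "p < s" "s < q" unfolding p_def q_def thw0[symmetric] th_less_iff by auto
    have RL2: "(R - L) * (R - L) > 0" using RL by (auto simp: zero_less_mult_iff)
    have prodeq: "(gg R L u - gg R L p) * (gg R L u - gg R L q) = ((R - L) * (R - L)) * ((u - p) * (u - q))" for u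
      unfolding gg_diff by (simp add: algebra_simps)
    define V where "V = {v. (v - gg R L p) * (v - gg R L q) < 0}"
    have oV: "open V" unfolding V_def
      by (rule open_Collect_less) (intro continuous_intros)+
    have "(s - p) * (s - q) < 0" using prod_neg_iff[of p q s] ps by auto
    then have "(gg R L s - gg R L p) * (gg R L s - gg R L q) < 0"
      unfolding prodeq using RL2 by (simp add: mult_pos_neg)
    then have rV: "r \<in> V" unfolding V_def gs by simp
    define c where "c = ln b / of_int Q"
    have c0: "c > 0" unfolding c_def using b1 Q by simp
    define Z where "Z = {z :: int. \<bar>c * of_int z - w0\<bar> < 1}"
    define K where "K = \<lceil>(\<bar>w0\<bar> + 1) / c\<rceil>"
    have "Z \<subseteq> {-K..K}"
    proof
      fix z assume "z \<in> Z"
      then have "\<bar>c * of_int z - w0\<bar> < 1" unfolding Z_def by simp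
      then have "c * \<bar>of_int z\<bar> \<le> \<bar>w0\<bar> + 1" using c0 by (simp add: abs_mult)
      then have "\<bar>of_int z\<bar> \<le> (\<bar>w0\<bar> + 1) / c" using c0 by (simp add: field_simps)
      then have "real_of_int \<bar>z\<bar> \<le> real_of_int K" unfolding K_def by linarith
      then have "\<bar>z\<bar> \<le> K" by linarith
      then show "z \<in> {-K..K}" by (simp add: abs_le_iff)
    qed
    then have fZ: "finite Z" using finite_subset by blast
    define F where "F = (\<lambda>z. ereal (gg R L (th (c * of_int z)))) ` Z"
    have key: "real n * ln a - real m * ln b = c * of_int (P * int n - Q * int m)" for n m
    proof -
      have "ln a = of_int P * ln b / of_int Q" using lin Q by (simp add: field_simps)
      then show ?thesis unfolding c_def using Q by (simp add: field_simps)
    qed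
    show ?thesis
    proof (rule exI[of _ "ereal ` V"], rule exI[of _ F], intro conjI allI impI)
      show "open (ereal ` V)" using open_ereal[OF oV] .
      show "x \<in> ereal ` V" using rV xr by simp
      show "finite F" unfolding F_def using fZ by simp
      fix n m
      assume "ereal (gg R L (th (real n * ln a - real m * ln b))) \<in> ereal ` V"
      then have "gg R L (th (c * of_int (P * int n - Q * int m))) \<in> V" unfolding key by auto
      then have uV: "(gg R L (th (c * of_int (P * int n - Q * int m))) - gg R L p) *
          (gg R L (th (c * of_int (P * int n - Q * int m))) - gg R L q) < 0" unfolding V_def by simp
      define u where "u = th (c * of_int (P * int n - Q * int m))"
      have "((R - L) * (R - L)) * ((u - p) * (u - q)) < 0"
        using uV unfolding u_def[symmetric] by (simp only: prodeq)
      then have "(u - p) * (u - q) < 0"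
        using RL2 mult_less_0_iff[of "(R - L) * (R - L)" "(u - p) * (u - q)"] by linarith
      then have "p < u" "u < q" using prod_neg_iff[of p q u] ps by auto
      then have "p < th (c * of_int (P * int n - Q * int m))" "th (c * of_int (P * int n - Q * int m)) < q"
        unfolding u_def .
      then have "\<bar>c * of_int (P * int n - Q * int m) - w0\<bar> < 1"
        unfolding p_def q_def th_less_iff by linarith
      then have "P * int n - Q * int m \<in> Z" unfolding Z_def by simp
      then show "ereal (gg R L (th (real n * ln a - real m * ln b))) \<in> F"
        unfolding key F_def by blast
    qed
  qed
qed

lemma part1_sub:
  fixes P Q :: int and x :: ereal
  assumes P: "P > 0" and Q: "Q > 0" and lin: "of_int Q * ln a = of_int P * ln b"
    and lp: "x islimpt {y. seq_cord_deriv f (cord_domain a b) y}"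
  shows "x = ereal R \<or> x = ereal L"
proof (rule ccontr)
  assume "\<not> (x = ereal R \<or> x = ereal L)"
  then have nR: "x \<noteq> ereal R" and nL: "x \<noteq> ereal L" by auto
  obtain U F where U: "open U" "x \<in> U" "finite F"
    and UF: "\<And>n m. ereal (gg R L (th (real n * ln a - real m * ln b))) \<in> U \<Longrightarrow>
        ereal (gg R L (th (real n * ln a - real m * ln b))) \<in> F"
    using part1_claim[OF P Q lin nR nL] by metis
  have fF: "finite (F - {x})" using U(3) by simp
  have o1: "open (U - (F - {x}))" by (rule open_Diff[OF U(1) finite_imp_closed[OF fF]])
  have x1: "x \<in> U - (F - {x})" using U(2) by simp
  obtain y where y: "y \<in> {y. seq_cord_deriv f (cord_domain a b) y}" "y \<in> U - (F - {x})" "y \<noteq> x"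
    using islimptE[OF lp x1 o1] by metis
  have yS: "seq_cord_deriv f (cord_domain a b) y" using y(1) by simp
  obtain x' nn mm where yx: "y = ereal x'"
    and G: "(\<lambda>j. gg R L (th (real (nn j) * ln a - real (mm j) * ln b))) \<longlonglongrightarrow> x'"
    using cordB[OF yS] by metis
  have o2: "open (U - F)" by (rule open_Diff[OF U(1) finite_imp_closed[OF U(3)]])
  have yUF: "ereal x' \<in> U - F" using y(2,3) unfolding yx[symmetric] by blast
  have G': "(\<lambda>j. ereal (gg R L (th (real (nn j) * ln a - real (mm j) * ln b)))) \<longlonglongrightarrow> ereal x'"
    using G by simp
  have "\<forall>\<^sub>F j in sequentially. ereal (gg R L (th (real (nn j) * ln a - real (mm j) * ln b))) \<in> U - F"
    by (rule topological_tendstoD[OF G' o2 yUF])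
  then obtain j where "ereal (gg R L (th (real (nn j) * ln a - real (mm j) * ln b))) \<in> U - F"
    unfolding eventually_sequentially by blast
  then show False using UF by blast
qed

lemma part1_R:
  fixes P Q :: int
  assumes P: "P > 0" and Q: "Q > 0" and lin: "of_int Q * ln a = of_int P * ln b" and RL: "R \<noteq> L"
  shows "ereal R islimpt {y. seq_cord_deriv f (cord_domain a b) y}"
proof (rule islimptI)
  fix T assume T: "ereal R \<in> T" "open T"
  define y where "y d = gg R L (th (- (real d * ln b)))" for d :: nat
  have mem: "seq_cord_deriv f (cord_domain a b) (ereal (y d))" for d
  proof (rule cordA, intro allI impI)
    fix \<epsilon> :: real and N :: nat assume e: "\<epsilon> > 0"
    have w: "real (nat Q * N) * ln a - real (nat P * N + d) * ln b = - (real d * ln b)"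
    proof -
      have nP: "real (nat P) = of_int P" and nQ: "real (nat Q) = of_int Q" using P Q by auto
      have "real N * (of_int Q * ln a) = real N * (of_int P * ln b)" using lin by simp
      then show ?thesis unfolding of_nat_mult of_nat_add nP nQ by (simp add: algebra_simps)
    qed
    have p1: "1 \<le> nat P" "1 \<le> nat Q" using P Q by auto
    have q1: "N \<le> nat P * N" "N \<le> nat Q * N"
      using mult_le_mono1[OF p1(1), of N] mult_le_mono1[OF p1(2), of N] by simp_all
    then have "N \<le> nat Q * N" "N \<le> nat P * N + d" by linarith+
    then show "\<exists>n m. N \<le> n \<and> N \<le> m \<and> \<bar>gg R L (th (real n * ln a - real m * ln b)) - y d\<bar> < \<epsilon>"
      using e w unfolding y_def by (intro exI[of _ "nat Q * N"] exI[of _ "nat P * N + d"]) simp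
  qed
  have ex: "exp (real d * ln b) = b ^ d" for d using b1 by (simp add: exp_of_nat_mult)
  have "(\<lambda>d. th (- (real d * ln b)) - 1) \<longlonglongrightarrow> 0"
  proof (rule Lim_null_comparison)
    show "\<forall>\<^sub>F d in sequentially. norm (th (- (real d * ln b)) - 1) \<le> inverse (b ^ d)"
    proof (intro always_eventually allI)
      fix d
      have "norm (th (- (real d * ln b)) - 1) = 1 - th (- (real d * ln b))"
        using th_lt1 by (simp add: abs_if)
      also have "\<dots> \<le> exp (- (real d * ln b))" by (rule one_minus_th)
      also have "\<dots> = inverse (b ^ d)" unfolding exp_minus ex ..
      finally show "norm (th (- (real d * ln b)) - 1) \<le> inverse (b ^ d)" .
    qed
    show "(\<lambda>d. inverse (b ^ d)) \<longlonglongrightarrow> 0" using LIMSEQ_inverse_realpow_zero[OF b1] .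
  qed
  then have "(\<lambda>d. th (- (real d * ln b))) \<longlonglongrightarrow> 1" by (rule LIM_zero_cancel)
  then have "y \<longlonglongrightarrow> gg R L 1" unfolding y_def gg_def by (intro tendsto_intros)
  then have "(\<lambda>d. ereal (y d)) \<longlonglongrightarrow> ereal R" by (simp add: gg_def)
  then have "\<forall>\<^sub>F d in sequentially. ereal (y d) \<in> T" by (rule topological_tendstoD[OF _ T(2,1)])
  then obtain d where d: "ereal (y d) \<in> T" unfolding eventually_sequentially by blast
  have "y d - gg R L 1 = (R - L) * (th (- (real d * ln b)) - 1)" unfolding y_def gg_diff ..
  moreover have "th (- (real d * ln b)) - 1 \<noteq> 0" using th_lt1 by (metis less_irrefl right_minus_eq)
  moreover have "gg R L 1 = R" by (simp add: gg_def)
  ultimately have "y d \<noteq> R" using RL by (metis mult_eq_0_iff right_minus_eq)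
  then show "\<exists>z\<in>{y. seq_cord_deriv f (cord_domain a b) y}. z \<in> T \<and> z \<noteq> ereal R"
    using mem[of d] d by blast
qed

lemma part1_L:
  fixes P Q :: int
  assumes P: "P > 0" and Q: "Q > 0" and lin: "of_int Q * ln a = of_int P * ln b" and RL: "R \<noteq> L"
  shows "ereal L islimpt {y. seq_cord_deriv f (cord_domain a b) y}"
proof (rule islimptI)
  fix T assume T: "ereal L \<in> T" "open T"
  define y where "y d = gg R L (th (real d * ln a))" for d :: nat
  have mem: "seq_cord_deriv f (cord_domain a b) (ereal (y d))" for d
  proof (rule cordA, intro allI impI)
    fix \<epsilon> :: real and N :: nat assume e: "\<epsilon> > 0"
    have w: "real (nat Q * N + d) * ln a - real (nat P * N) * ln b = real d * ln a"
    proof -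
      have nP: "real (nat P) = of_int P" and nQ: "real (nat Q) = of_int Q" using P Q by auto
      have "real N * (of_int Q * ln a) = real N * (of_int P * ln b)" using lin by simp
      then show ?thesis unfolding of_nat_mult of_nat_add nP nQ by (simp add: algebra_simps)
    qed
    have p1: "1 \<le> nat P" "1 \<le> nat Q" using P Q by auto
    have q1: "N \<le> nat P * N" "N \<le> nat Q * N"
      using mult_le_mono1[OF p1(1), of N] mult_le_mono1[OF p1(2), of N] by simp_all
    then have "N \<le> nat Q * N + d" "N \<le> nat P * N" by linarith+
    then show "\<exists>n m. N \<le> n \<and> N \<le> m \<and> \<bar>gg R L (th (real n * ln a - real m * ln b)) - y d\<bar> < \<epsilon>"
      using e w unfolding y_def by (intro exI[of _ "nat Q * N + d"] exI[of _ "nat P * N"]) simp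
  qed
  have ex: "exp (real d * ln a) = a ^ d" for d using a1 by (simp add: exp_of_nat_mult)
  have "(\<lambda>d. th (real d * ln a)) \<longlonglongrightarrow> 0"
  proof (rule Lim_null_comparison)
    show "\<forall>\<^sub>F d in sequentially. norm (th (real d * ln a)) \<le> inverse (a ^ d)"
    proof (intro always_eventually allI)
      fix d
      have "norm (th (real d * ln a)) = th (real d * ln a)"
        using th_pos[of "real d * ln a"] by simp
      also have "\<dots> \<le> exp (- (real d * ln a))" by (rule th_le_exp)
      also have "\<dots> = inverse (a ^ d)" unfolding exp_minus ex ..
      finally show "norm (th (real d * ln a)) \<le> inverse (a ^ d)" .
    qed
    show "(\<lambda>d. inverse (a ^ d)) \<longlonglongrightarrow> 0" using LIMSEQ_inverse_realpow_zero[OF a1] .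
  qed
  then have "y \<longlonglongrightarrow> gg R L 0" unfolding y_def gg_def by (intro tendsto_intros)
  then have "(\<lambda>d. ereal (y d)) \<longlonglongrightarrow> ereal L" by (simp add: gg_def)
  then have "\<forall>\<^sub>F d in sequentially. ereal (y d) \<in> T" by (rule topological_tendstoD[OF _ T(2,1)])
  then obtain d where d: "ereal (y d) \<in> T" unfolding eventually_sequentially by blast
  have "y d - gg R L 0 = (R - L) * (th (real d * ln a) - 0)" unfolding y_def gg_diff ..
  moreover have "th (real d * ln a) \<noteq> 0" using th_pos[of "real d * ln a"] by simp
  moreover have "gg R L 0 = L" by (simp add: gg_def)
  ultimately have "y d \<noteq> L" using RL by (metis mult_eq_0_iff right_minus_eq diff_zero)
  then show "\<exists>z\<in>{y. seq_cord_deriv f (cord_domain a b) y}. z \<in> T \<and> z \<noteq> ereal L"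
    using mem[of d] d by blast
qed

end


theorem theorem4p7:
  fixes a b R L :: real and f :: "real \<Rightarrow> real"
  assumes "a > 1" and "b > 1"
    and "f 0 = 0"
    and "(\<lambda>n. f (1 / a ^ n) / (1 / a ^ n)) \<longlonglongrightarrow> R"
    and "(\<lambda>n. f (- (1 / b ^ n)) / (- (1 / b ^ n))) \<longlonglongrightarrow> L"
  shows "(ln a / ln b \<in> \<rat> \<longrightarrow>
            {x :: ereal. x islimpt {y. seq_cord_deriv f (cord_domain a b) y}} \<subseteq> {ereal R, ereal L} \<and>
            (R \<noteq> L \<longrightarrow>
              {x :: ereal. x islimpt {y. seq_cord_deriv f (cord_domain a b) y}} = {ereal R, ereal L}))
       \<and> (ln a / ln b \<notin> \<rat> \<longrightarrow>
            (\<forall>x \<in> {min L R .. max L R}. seq_cord_deriv f (cord_domain a b) (ereal x)))"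
proof (intro conjI impI ballI)
  assume irr: "ln a / ln b \<notin> \<rat>"
  fix x assume "x \<in> {min L R .. max L R}"
  then show "seq_cord_deriv f (cord_domain a b) (ereal x)"
    using part2[OF assms(1,2,4,5) irr] by blast
next
  assume rat: "ln a / ln b \<in> \<rat>"
  obtain P Q :: int where P: "P > 0" and Q: "Q > 0" and lin: "of_int Q * ln a = of_int P * ln b"
    using rat_lin[OF assms(1,2,4,5) rat] by blast
  show sub: "{x :: ereal. x islimpt {y. seq_cord_deriv f (cord_domain a b) y}} \<subseteq> {ereal R, ereal L}"
    using part1_sub[OF assms(1,2,4,5) P Q lin] by blast
  assume RL: "R \<noteq> L"
  show "{x :: ereal. x islimpt {y. seq_cord_deriv f (cord_domain a b) y}} = {ereal R, ereal L}"
    using sub part1_R[OF assms(1,2,4,5) P Q lin RL] part1_L[OF assms(1,2,4,5) P Q lin RL] by blast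
qed

end
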